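(* For every pair of reals $\mu>\lambda\ge 0$ there exists a finite game $G$ (with two agents) and a welfare maximizer $a^*$ with $W(a^* )>0$ such that $G$ is $(\lambda,\mu)$-smooth, $G$ has a unique sink equilibrium (for the best-response process), and $\mathrm{PoS}(G)=0$.
   Context: A finite game $G$ consists of agents $N=\{1,\dots,n\}$, finite nonempty action sets $\mathcal A_i$, joint action set $\mathcal A=\mathcal A_1\times\cdots\times\mathcal A_n$, a welfare function $W:\mathcal A\to\mathbb R_{\ge 0}$ and utility functions $U_i:\mathcal A\to\mathbb R$, $i\in N$. For $a\in\mathcal A$, $a_{-i}$ denotes the actions of all agents other than $i$, and $(b_i,a_{-i})$ is the joint action obtained from $a$ by replacing $a_i$ with $b_i$. Fix $a^*\in\arg\max_{a\in\mathcal A}W(a)$. For $\mu\ge\lambda\ge0$, $G$ is $(\lambda,\mu)$-smooth if $\sum_{i=1}^n\big(U_i(a)-U_i(a^*_i,a_{-i})\big)\le\mu W(a)-\lambda W(a^* )$ for all $a\in\mathcal A$. The best response set of agent $i$ at $a$ is $\mathrm{BR}_i(a)=\arg\max_{b_i\in\mathcal A_i}U_i(b_i,a_{-i})$. The best-response process is the Markov chain on $\mathcal A$ in which, from state $a$, an agent $i$ is chosen uniformly at random from $N$, then $b_i$ is chosen uniformly at random from $\mathrm{BR}_i(a)$, and the next state is $(b_i,a_{-i})$. A sink strongly connected component is a nonempty set $S\subseteq\mathcal A$ such that for all $a,\bar a\in S$ there is a positive-probability path of the chain from $a$ to $\bar a$, and no state outside $S$ is reachable with positive probability from a state of $S$.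 A sink equilibrium is a stationary distribution $\sigma$ of the chain whose support equals a sink strongly connected component; $\mathrm{SE}$ is the set of sink equilibria, and $\mathrm{PoS}(G)=\min_{\sigma\in\mathrm{SE}}\mathbb E_{a\sim\sigma}[W(a)]/W(a^* )$. *)

theory Defs
  imports Complex_Main "HOL-Library.FuncSet"
begin

definition joint :: "nat \<Rightarrow> (nat \<Rightarrow> nat set) \<Rightarrow> (nat \<Rightarrow> nat) set" where
  "joint n A = PiE {..<n} A"

definition finite_game ::
  "nat \<Rightarrow> (nat \<Rightarrow> nat set) \<Rightarrow> ((nat \<Rightarrow> nat) \<Rightarrow> real) \<Rightarrow> (nat \<Rightarrow> (nat \<Rightarrow> nat) \<Rightarrow> real) \<Rightarrow> bool" where
  "finite_game n A W U \<longleftrightarrow> n \<ge> 1 \<and> (\<forall>i<n. finite (A i) \<and> A i \<noteq> {}) \<and>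
     (\<forall>a\<in>joint n A. W a \<ge> 0)"

definition welfare_max :: "nat \<Rightarrow> (nat \<Rightarrow> nat set) \<Rightarrow> ((nat \<Rightarrow> nat) \<Rightarrow> real) \<Rightarrow> (nat \<Rightarrow> nat) \<Rightarrow> bool" where
  "welfare_max n A W astar \<longleftrightarrow> astar \<in> joint n A \<and> (\<forall>a\<in>joint n A. W a \<le> W astar)"

definition smooth ::
  "nat \<Rightarrow> (nat \<Rightarrow> nat set) \<Rightarrow> ((nat \<Rightarrow> nat) \<Rightarrow> real) \<Rightarrow> (nat \<Rightarrow> (nat \<Rightarrow> nat) \<Rightarrow> real)
   \<Rightarrow> (nat \<Rightarrow> nat) \<Rightarrow> real \<Rightarrow> real \<Rightarrow> bool" where
  "smooth n A W U astar lam mu \<longleftrightarrow> mu \<ge> lam \<and> lam \<ge> 0 \<and>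
     (\<forall>a\<in>joint n A. (\<Sum>i<n. U i a - U i (a(i := astar i))) \<le> mu * W a - lam * W astar)"

definition BR :: "(nat \<Rightarrow> nat set) \<Rightarrow> (nat \<Rightarrow> (nat \<Rightarrow> nat) \<Rightarrow> real) \<Rightarrow> nat \<Rightarrow> (nat \<Rightarrow> nat) \<Rightarrow> nat set" where
  "BR A U i a = {b \<in> A i. \<forall>c\<in>A i. U i (a(i := c)) \<le> U i (a(i := b))}"

definition trans_prob ::
  "nat \<Rightarrow> (nat \<Rightarrow> nat set) \<Rightarrow> (nat \<Rightarrow> (nat \<Rightarrow> nat) \<Rightarrow> real) \<Rightarrow> (nat \<Rightarrow> nat) \<Rightarrow> (nat \<Rightarrow> nat) \<Rightarrow> real" where
  "trans_prob n A U a a' =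
     (\<Sum>i<n. (1 / real n) * (real (card {b \<in> BR A U i a. a(i := b) = a'}) / real (card (BR A U i a))))"

definition step_rel :: "nat \<Rightarrow> (nat \<Rightarrow> nat set) \<Rightarrow> (nat \<Rightarrow> (nat \<Rightarrow> nat) \<Rightarrow> real) \<Rightarrow> ((nat \<Rightarrow> nat) \<times> (nat \<Rightarrow> nat)) set" where
  "step_rel n A U = {(a, a'). a \<in> joint n A \<and> trans_prob n A U a a' > 0}"

definition sink_scc :: "nat \<Rightarrow> (nat \<Rightarrow> nat set) \<Rightarrow> (nat \<Rightarrow> (nat \<Rightarrow> nat) \<Rightarrow> real) \<Rightarrow> (nat \<Rightarrow> nat) set \<Rightarrow> bool" where
  "sink_scc n A U S \<longleftrightarrow> S \<noteq> {} \<and> S \<subseteq> joint n A \<and>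
     (\<forall>a\<in>S. \<forall>a'\<in>S. (a, a') \<in> (step_rel n A U)\<^sup>*) \<and>
     (\<forall>a\<in>S. \<forall>a'. (a, a') \<in> (step_rel n A U)\<^sup>* \<longrightarrow> a' \<in> S)"

definition stationary :: "nat \<Rightarrow> (nat \<Rightarrow> nat set) \<Rightarrow> (nat \<Rightarrow> (nat \<Rightarrow> nat) \<Rightarrow> real) \<Rightarrow> ((nat \<Rightarrow> nat) \<Rightarrow> real) \<Rightarrow> bool" where
  "stationary n A U \<sigma> \<longleftrightarrow> (\<forall>a. a \<notin> joint n A \<longrightarrow> \<sigma> a = 0) \<and> (\<forall>a\<in>joint n A. \<sigma> a \<ge> 0) \<and>
     (\<Sum>a\<in>joint n A. \<sigma> a) = 1 \<and>
     (\<forall>a'\<in>joint n A. \<sigma> a' = (\<Sum>a\<in>joint n A. \<sigma> a * trans_prob n A U a a'))"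

definition sink_equilibrium :: "nat \<Rightarrow> (nat \<Rightarrow> nat set) \<Rightarrow> (nat \<Rightarrow> (nat \<Rightarrow> nat) \<Rightarrow> real) \<Rightarrow> ((nat \<Rightarrow> nat) \<Rightarrow> real) \<Rightarrow> bool" where
  "sink_equilibrium n A U \<sigma> \<longleftrightarrow> stationary n A U \<sigma> \<and> sink_scc n A U {a \<in> joint n A. \<sigma> a > 0}"

definition PoS ::
  "nat \<Rightarrow> (nat \<Rightarrow> nat set) \<Rightarrow> ((nat \<Rightarrow> nat) \<Rightarrow> real) \<Rightarrow> (nat \<Rightarrow> (nat \<Rightarrow> nat) \<Rightarrow> real) \<Rightarrow> (nat \<Rightarrow> nat) \<Rightarrow> real" where
  "PoS n A W U astar =
     Inf {(\<Sum>a\<in>joint n A. \<sigma> a * W a) / W astar | \<sigma>. sink_equilibrium n A U \<sigma>}"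

end

theory Submission
  imports Defs
begin

definition st :: "nat \<Rightarrow> nat \<Rightarrow> nat \<Rightarrow> nat" where
  "st x y = (\<lambda>k. if k = 0 then x else if k = 1 then y else undefined)"

lemma st_app[simp]: "st x y 0 = x" "st x y (Suc 0) = y" "st x y 1 = y"
  by (auto simp: st_def)

lemma st_eq[simp]: "st x y = st x' y' \<longleftrightarrow> x = x' \<and> y = y'"
proof
  assume h: "st x y = st x' y'"
  have "st x y 0 = st x' y' 0" "st x y 1 = st x' y' 1" using h by simp_all
  thus "x = x' \<and> y = y'" by simp
qed simp

lemma st_upd[simp]: "(st x y)(0 := b) = st b y" "(st x y)(1 := b) = st x b"
  "(st x y)(Suc 0 := b) = st x b"
  by (auto simp: st_def fun_eq_iff)

definition AA :: "nat \<Rightarrow> nat set" where "AA = (\<lambda>_. {0,1,2})"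

definition UU :: "real \<Rightarrow> nat \<Rightarrow> (nat \<Rightarrow> nat) \<Rightarrow> real" where
  "UU lam i a = (if a 0 = 2 \<or> a 1 = 2 then 0
     else if i = 0 then (if a 0 = a 1 then 1 else - (1 + \<bar>lam\<bar>))
     else (if a 0 \<noteq> a 1 then 1 else - (1 + \<bar>lam\<bar>)))"

definition WW :: "(nat \<Rightarrow> nat) \<Rightarrow> real" where
  "WW a = (if a 0 = 2 \<or> a 1 = 2 then 1 else 0)"

definition CC :: "(nat \<Rightarrow> nat) set" where "CC = {st 0 0, st 0 1, st 1 0, st 1 1}"

lemma st_in_joint: "x \<in> {0,1,2} \<Longrightarrow> y \<in> {0,1,2} \<Longrightarrow> st x y \<in> joint 2 AA"
  by (auto simp: joint_def PiE_iff extensional_def st_def AA_def less_2_cases_iff)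

lemma joint_eq: "joint 2 AA = {st 0 0, st 0 1, st 0 2, st 1 0, st 1 1, st 1 2, st 2 0, st 2 1, st 2 2}"
proof
  show "joint 2 AA \<subseteq> {st 0 0, st 0 1, st 0 2, st 1 0, st 1 1, st 1 2, st 2 0, st 2 1, st 2 2}"
  proof
    fix a assume a: "a \<in> joint 2 AA"
    have e: "a = st (a 0) (a 1)"
    proof
      fix k show "a k = st (a 0) (a 1) k"
        using a by (cases "k = 0"; cases "k = 1") (auto simp: st_def joint_def PiE_iff extensional_def)
    qed
    have "a 0 \<in> {0,1,2}" "a 1 \<in> {0,1,2}" using a by (auto simp: joint_def PiE_iff AA_def)
    then show "a \<in> {st 0 0, st 0 1, st 0 2, st 1 0, st 1 1, st 1 2, st 2 0, st 2 1, st 2 2}"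
      by (subst e) auto
  qed
  show "{st 0 0, st 0 1, st 0 2, st 1 0, st 1 1, st 1 2, st 2 0, st 2 1, st 2 2} \<subseteq> joint 2 AA"
    by (auto intro!: st_in_joint)
qed

lemma BR0: "y \<le> 2 \<Longrightarrow> BR AA (UU lam) 0 (st x y) = (if y = 2 then {0,1,2} else {y})"
  unfolding BR_def AA_def UU_def by (auto simp: st_def le_Suc_eq numeral_2_eq_2)

lemma BR1: "x \<le> 2 \<Longrightarrow> BR AA (UU lam) 1 (st x y) = (if x = 2 then {0,1,2} else {1 - x})"
  unfolding BR_def AA_def UU_def by (auto simp: st_def le_Suc_eq numeral_2_eq_2)

lemma BR1'[simp]: "x \<le> 2 \<Longrightarrow> BR AA (UU lam) (Suc 0) (st x y) = (if x = 2 then {0,1,2} else {1 - x})"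
  using BR1 by simp

declare BR0[simp] BR1[simp]

lemma tp_pos:
  assumes n: "n > 0" and fin: "\<And>i. i<n \<Longrightarrow> finite (BR A U i a) \<and> BR A U i a \<noteq> {}"
  shows "trans_prob n A U a a' > 0 \<longleftrightarrow> (\<exists>i<n. \<exists>b\<in>BR A U i a. a(i:=b) = a')"
proof -
  define t where "t i = (1 / real n) * (real (card {b \<in> BR A U i a. a(i := b) = a'}) / real (card (BR A U i a)))" for i
  have tp: "trans_prob n A U a a' = (\<Sum>i<n. t i)" by (simp add: trans_prob_def t_def)
  have nn: "\<And>i. t i \<ge> 0" by (simp add: t_def)
  have tpos: "t i > 0 \<longleftrightarrow> (\<exists>b\<in>BR A U i a. a(i:=b) = a')" if "i < n" for i
  proof -
    have f: "finite (BR A U i a)" "BR A U i a \<noteq> {}" using fin[OF that] by auto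
    have c: "card (BR A U i a) > 0" using f by (simp add: card_gt_0_iff)
    have "finite {b \<in> BR A U i a. a(i := b) = a'}" using f by simp
    hence "card {b \<in> BR A U i a. a(i := b) = a'} > 0 \<longleftrightarrow> (\<exists>b\<in>BR A U i a. a(i:=b) = a')"
      by (auto simp: card_gt_0_iff)
    thus ?thesis using c n by (auto simp: t_def)
  qed
  show ?thesis
  proof
    assume "trans_prob n A U a a' > 0"
    hence "(\<Sum>i<n. t i) \<noteq> 0" by (simp add: tp)
    then obtain i where "i < n" "t i \<noteq> 0" by (meson lessThan_iff sum.neutral)
    moreover have "t i > 0" using \<open>t i \<noteq> 0\<close> nn[of i] by linarith
    ultimately show "\<exists>i<n. \<exists>b\<in>BR A U i a. a(i:=b) = a'" using tpos by blast
  next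
    assume "\<exists>i<n. \<exists>b\<in>BR A U i a. a(i:=b) = a'"
    then obtain i where i: "i < n" "t i > 0" using tpos by blast
    have "t i \<le> (\<Sum>i<n. t i)" by (rule member_le_sum) (use i nn in auto)
    thus "trans_prob n A U a a' > 0" using i tp by linarith
  qed
qed

lemma card_single_cond[simp]: "card {b. b = c \<and> P b} = (if P c then 1 else 0)"
proof -
  have "{b. b = c \<and> P b} = (if P c then {c} else {})" by auto
  thus ?thesis by simp
qed

lemma tp_single:
  assumes "BR A U 0 a = {b0}" "BR A U 1 a = {b1}"
  shows "trans_prob 2 A U a a' = (if a(0:=b0) = a' then 1/2 else 0) + (if a(1:=b1) = a' then 1/2 else 0)"
  using assms by (simp add: trans_prob_def numeral_2_eq_2 lessThan_Suc)

lemma BR_ok: "a \<in> joint 2 AA \<Longrightarrow> i < 2 \<Longrightarrow> finite (BR AA (UU lam) i a) \<and> BR AA (UU lam) i a \<noteq> {}"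
  unfolding joint_eq by (auto simp: less_2_cases_iff BR0 BR1)

lemma step_iff: "(a,a') \<in> step_rel 2 AA (UU lam) \<longleftrightarrow> a \<in> joint 2 AA \<and> (\<exists>i<2. \<exists>b\<in>BR AA (UU lam) i a. a(i:=b) = a')"
  unfolding step_rel_def using tp_pos[of 2 AA "UU lam" a a'] BR_ok by auto

lemma edge: "a \<in> joint 2 AA \<Longrightarrow> i < 2 \<Longrightarrow> b \<in> BR AA (UU lam) i a \<Longrightarrow> (a, a(i:=b)) \<in> step_rel 2 AA (UU lam)"
  using step_iff by blast

lemma e0: "x \<in> {0,1,2} \<Longrightarrow> y \<in> {0,1,2} \<Longrightarrow> b \<in> BR AA (UU lam) 0 (st x y) \<Longrightarrow> (st x y, st b y) \<in> step_rel 2 AA (UU lam)"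
  using edge[of "st x y" 0 b lam] st_in_joint by simp
lemma e1: "x \<in> {0,1,2} \<Longrightarrow> y \<in> {0,1,2} \<Longrightarrow> b \<in> BR AA (UU lam) 1 (st x y) \<Longrightarrow> (st x y, st x b) \<in> step_rel 2 AA (UU lam)"
  using edge[of "st x y" 1 b lam] st_in_joint by simp

lemma closed: "a \<in> CC \<Longrightarrow> (a,a') \<in> step_rel 2 AA (UU lam) \<Longrightarrow> a' \<in> CC"
  unfolding step_iff CC_def by (auto simp: less_2_cases_iff BR0 BR1)

lemma closed_rt: "(a,a') \<in> (step_rel 2 AA (UU lam))\<^sup>* \<Longrightarrow> a \<in> CC \<Longrightarrow> a' \<in> CC"
  by (induction rule: rtrancl_induct) (auto intro: closed)

lemma CC_joint: "CC \<subseteq> joint 2 AA" unfolding CC_def joint_eq by auto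

lemma reach:
  fixes lam :: real
  defines "R \<equiv> step_rel 2 AA (UU lam)"
  shows "\<And>a. a \<in> joint 2 AA \<Longrightarrow> (a, st 0 0) \<in> R\<^sup>*" "\<And>c. c \<in> CC \<Longrightarrow> (st 0 0, c) \<in> R\<^sup>*"
proof -
  have r10: "(st 1 0, st 0 0) \<in> R" unfolding R_def by (rule e0) auto
  have r11: "(st 1 1, st 1 0) \<in> R" unfolding R_def by (rule e1) auto
  have r01: "(st 0 1, st 1 1) \<in> R" unfolding R_def by (rule e0) auto
  have r00: "(st 0 0, st 0 1) \<in> R" unfolding R_def by (rule e1) auto
  have r02: "(st 0 2, st 0 1) \<in> R" unfolding R_def by (rule e1) auto
  have r12: "(st 1 2, st 1 0) \<in> R" unfolding R_def by (rule e1) auto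
  have r20: "(st 2 0, st 0 0) \<in> R" unfolding R_def by (rule e0) auto
  have r21: "(st 2 1, st 1 1) \<in> R" unfolding R_def by (rule e0) auto
  have r22: "(st 2 2, st 0 2) \<in> R" unfolding R_def by (rule e0) auto
  have t10: "(st 1 0, st 0 0) \<in> R\<^sup>*" using r10 by blast
  have t11: "(st 1 1, st 0 0) \<in> R\<^sup>*" using r11 t10 by (meson converse_rtrancl_into_rtrancl)
  have t01: "(st 0 1, st 0 0) \<in> R\<^sup>*" using r01 t11 by (meson converse_rtrancl_into_rtrancl)
  have t02: "(st 0 2, st 0 0) \<in> R\<^sup>*" using r02 t01 by (meson converse_rtrancl_into_rtrancl)
  have t12: "(st 1 2, st 0 0) \<in> R\<^sup>*" using r12 t10 by (meson converse_rtrancl_into_rtrancl)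
  have t20: "(st 2 0, st 0 0) \<in> R\<^sup>*" using r20 by blast
  have t21: "(st 2 1, st 0 0) \<in> R\<^sup>*" using r21 t11 by (meson converse_rtrancl_into_rtrancl)
  have t22: "(st 2 2, st 0 0) \<in> R\<^sup>*" using r22 t02 by (meson converse_rtrancl_into_rtrancl)
  show "\<And>a. a \<in> joint 2 AA \<Longrightarrow> (a, st 0 0) \<in> R\<^sup>*"
    unfolding joint_eq using t10 t11 t01 t02 t12 t20 t21 t22 by auto
  have f01: "(st 0 0, st 0 1) \<in> R\<^sup>*" using r00 by blast
  have f11: "(st 0 0, st 1 1) \<in> R\<^sup>*" using f01 r01 by (meson rtrancl_into_rtrancl)
  have f10: "(st 0 0, st 1 0) \<in> R\<^sup>*" using f11 r11 by (meson rtrancl_into_rtrancl)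
  show "\<And>c. c \<in> CC \<Longrightarrow> (st 0 0, c) \<in> R\<^sup>*"
    unfolding CC_def using f01 f11 f10 by auto
qed

lemma sink_iff: "sink_scc 2 AA (UU lam) S \<longleftrightarrow> S = CC"
proof
  assume S: "sink_scc 2 AA (UU lam) S"
  then obtain a where a: "a \<in> S" unfolding sink_scc_def by blast
  have aj: "a \<in> joint 2 AA" using S a unfolding sink_scc_def by blast
  have "CC \<subseteq> S"
  proof
    fix c assume "c \<in> CC"
    hence "(a, c) \<in> (step_rel 2 AA (UU lam))\<^sup>*" using reach[of a lam] reach(2)[of c lam] aj
      by (meson rtrancl_trans)
    thus "c \<in> S" using S a unfolding sink_scc_def by blast
  qed
  moreover have "S \<subseteq> CC"
  proof
    fix s assume s: "s \<in> S"
    have c00: "st 0 0 \<in> S" using \<open>CC \<subseteq> S\<close> by (auto simp: CC_def)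
    hence "(st 0 0, s) \<in> (step_rel 2 AA (UU lam))\<^sup>*" using S s unfolding sink_scc_def by blast
    thus "s \<in> CC" by (rule closed_rt) (simp add: CC_def)
  qed
  ultimately show "S = CC" by blast
next
  assume S: "S = CC"
  show "sink_scc 2 AA (UU lam) S"
    unfolding sink_scc_def S
  proof (intro conjI ballI allI impI)
    show "CC \<noteq> {}" by (simp add: CC_def)
    show "CC \<subseteq> joint 2 AA" by (rule CC_joint)
    fix a a' assume "a \<in> CC"
    { assume "a' \<in> CC"
      thus "(a, a') \<in> (step_rel 2 AA (UU lam))\<^sup>*" using reach[of a lam] reach(2)[of a' lam] CC_joint \<open>a \<in> CC\<close>
        by (meson rtrancl_trans subsetD) }
    { assume "(a, a') \<in> (step_rel 2 AA (UU lam))\<^sup>*"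
      thus "a' \<in> CC" using closed_rt \<open>a \<in> CC\<close> by blast }
  qed
qed

lemma P00: "trans_prob 2 AA (UU lam) (st 0 0) a' = (if st 0 0 = a' then 1/2 else 0) + (if st 0 1 = a' then 1/2 else 0)"
  using tp_single[of AA "UU lam" "st 0 0" 0 1 a'] by simp
lemma P01: "trans_prob 2 AA (UU lam) (st 0 1) a' = (if st 1 1 = a' then 1/2 else 0) + (if st 0 1 = a' then 1/2 else 0)"
  using tp_single[of AA "UU lam" "st 0 1" 1 1 a'] by simp
lemma P11: "trans_prob 2 AA (UU lam) (st 1 1) a' = (if st 1 1 = a' then 1/2 else 0) + (if st 1 0 = a' then 1/2 else 0)"
  using tp_single[of AA "UU lam" "st 1 1" 1 0 a'] by simp
lemma P10: "trans_prob 2 AA (UU lam) (st 1 0) a' = (if st 0 0 = a' then 1/2 else 0) + (if st 1 0 = a' then 1/2 else 0)"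
  using tp_single[of AA "UU lam" "st 1 0" 0 0 a'] by simp

definition sig0 :: "(nat \<Rightarrow> nat) \<Rightarrow> real" where "sig0 a = (if a \<in> CC then 1/4 else 0)"

lemma sig0_stat: "stationary 2 AA (UU lam) sig0"
  unfolding stationary_def
proof (intro conjI allI impI ballI)
  fix a assume "a \<notin> joint 2 AA" thus "sig0 a = 0" using CC_joint by (auto simp: sig0_def)
next
  fix a show "sig0 a \<ge> 0" by (simp add: sig0_def)
next
  show "(\<Sum>a\<in>joint 2 AA. sig0 a) = 1" by (simp add: joint_eq sig0_def CC_def)
next
  fix a' assume "a' \<in> joint 2 AA"
  thus "sig0 a' = (\<Sum>a\<in>joint 2 AA. sig0 a * trans_prob 2 AA (UU lam) a a')"
    unfolding joint_eq by (auto simp: sig0_def CC_def P00 P01 P11 P10 P01[unfolded One_nat_def] P11[unfolded One_nat_def] P10[unfolded One_nat_def])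
qed

lemma sig0_se: "sink_equilibrium 2 AA (UU lam) sig0"
proof -
  have "{a \<in> joint 2 AA. sig0 a > 0} = CC" using CC_joint by (auto simp: sig0_def)
  thus ?thesis unfolding sink_equilibrium_def using sig0_stat sink_iff by simp
qed

lemma se_unique: assumes "sink_equilibrium 2 AA (UU lam) \<sigma>" shows "\<sigma> = sig0"
proof -
  have st: "stationary 2 AA (UU lam) \<sigma>" and sup: "{a \<in> joint 2 AA. \<sigma> a > 0} = CC"
    using assms sink_iff unfolding sink_equilibrium_def by auto
  have out: "\<sigma> a = 0" if "a \<notin> joint 2 AA" for a using st that unfolding stationary_def by auto
  have nn: "\<sigma> a \<ge> 0" if "a \<in> joint 2 AA" for a using st that unfolding stationary_def by auto
  have z: "\<sigma> a = 0" if "a \<in> joint 2 AA" "a \<notin> CC" for a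
    using nn[OF that(1)] that sup by (metis (mono_tags, lifting) mem_Collect_eq order_less_le)
  have z5: "\<sigma> (st 0 2) = 0" "\<sigma> (st 1 2) = 0" "\<sigma> (st 2 0) = 0" "\<sigma> (st 2 1) = 0" "\<sigma> (st 2 2) = 0"
    by (rule z; simp add: joint_eq CC_def)+
  have sum1: "(\<Sum>a\<in>joint 2 AA. \<sigma> a) = 1" using st unfolding stationary_def by auto
  have eq: "\<sigma> a' = (\<Sum>a\<in>joint 2 AA. \<sigma> a * trans_prob 2 AA (UU lam) a a')" if "a' \<in> joint 2 AA" for a'
    using st that unfolding stationary_def by auto
  have e1: "\<sigma> (st 0 0) = \<sigma> (st 0 0)/2 + \<sigma> (st 1 0)/2"
    using eq[of "st 0 0"] unfolding joint_eq by (simp add: z5 z5[unfolded One_nat_def] P00 P01 P11 P10 P01[unfolded One_nat_def] P11[unfolded One_nat_def] P10[unfolded One_nat_def])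
  have e2: "\<sigma> (st 0 1) = \<sigma> (st 0 0)/2 + \<sigma> (st 0 1)/2"
    using eq[of "st 0 1"] unfolding joint_eq by (simp add: z5 z5[unfolded One_nat_def] P00 P01 P11 P10 P01[unfolded One_nat_def] P11[unfolded One_nat_def] P10[unfolded One_nat_def])
  have e3: "\<sigma> (st 1 1) = \<sigma> (st 0 1)/2 + \<sigma> (st 1 1)/2"
    using eq[of "st 1 1"] unfolding joint_eq by (simp add: z5 z5[unfolded One_nat_def] P00 P01 P11 P10 P01[unfolded One_nat_def] P11[unfolded One_nat_def] P10[unfolded One_nat_def])
  have s1: "\<sigma> (st 0 0) + \<sigma> (st 0 1) + \<sigma> (st 1 0) + \<sigma> (st 1 1) = 1"
    using sum1 unfolding joint_eq by (simp add: z5 z5[unfolded One_nat_def])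
  have v: "\<sigma> (st 0 0) = 1/4" "\<sigma> (st 0 1) = 1/4" "\<sigma> (st 1 0) = 1/4" "\<sigma> (st 1 1) = 1/4"
    using e1 e2 e3 s1 by linarith+
  show ?thesis
  proof
    fix a show "\<sigma> a = sig0 a"
    proof (cases "a \<in> CC")
      case True thus ?thesis using v by (auto simp: CC_def sig0_def)
    next
      case False thus ?thesis using z out by (cases "a \<in> joint 2 AA") (auto simp: sig0_def)
    qed
  qed
qed

theorem proposition3:
  fixes lam mu :: real
  assumes "0 \<le> lam" and "lam < mu"
  shows "\<exists>A W U astar.
           finite_game 2 A W U \<and> welfare_max 2 A W astar \<and> W astar > 0 \<and>
           smooth 2 A W U astar lam mu \<and>
           (\<exists>!\<sigma>. sink_equilibrium 2 A U \<sigma>) \<and>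
           PoS 2 A W U astar = 0"
proof (intro exI conjI)
  show "finite_game 2 AA WW (UU lam)"
    unfolding finite_game_def by (auto simp: AA_def WW_def)
  show "welfare_max 2 AA WW (st 2 2)"
    unfolding welfare_max_def by (auto simp: joint_eq WW_def)
  show "WW (st 2 2) > 0" by (simp add: WW_def)
  show "smooth 2 AA WW (UU lam) (st 2 2) lam mu"
    unfolding smooth_def using assms
    by (auto simp: joint_eq WW_def UU_def numeral_2_eq_2 lessThan_Suc)
  show "\<exists>!\<sigma>. sink_equilibrium 2 AA (UU lam) \<sigma>"
    using sig0_se se_unique by blast
  have set: "{(\<Sum>a\<in>joint 2 AA. \<sigma> a * WW a) / WW (st 2 2) | \<sigma>. sink_equilibrium 2 AA (UU lam) \<sigma>} = {0}"
  proof -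
    have z: "(\<Sum>a\<in>joint 2 AA. sig0 a * WW a) / WW (st 2 2) = 0"
      by (simp add: joint_eq sig0_def CC_def WW_def)
    show ?thesis
    proof (rule set_eqI, rule iffI)
      fix v assume "v \<in> {(\<Sum>a\<in>joint 2 AA. \<sigma> a * WW a) / WW (st 2 2) | \<sigma>. sink_equilibrium 2 AA (UU lam) \<sigma>}"
      then obtain \<sigma> where "sink_equilibrium 2 AA (UU lam) \<sigma>" "v = (\<Sum>a\<in>joint 2 AA. \<sigma> a * WW a) / WW (st 2 2)" by blast
      moreover have "\<sigma> = sig0" using se_unique calculation(1) by blast
      ultimately show "v \<in> {0}" using z by simp
    next
      fix v assume "v \<in> ({0}::real set)"
      thus "v \<in> {(\<Sum>a\<in>joint 2 AA. \<sigma> a * WW a) / WW (st 2 2) | \<sigma>. sink_equilibrium 2 AA (UU lam) \<sigma>}"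
        using sig0_se[of lam] z by auto
    qed
  qed
  show "PoS 2 AA WW (UU lam) (st 2 2) = 0"
    unfolding PoS_def set by simp
qed

end
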